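(* $\mathsf{AP}(R_2,R_3)=\mathsf{AP}(R_3,R_2)=\mathsf{N}$.
   Context: Tuples in $\{0,1\}^4$ are written as strings $abcd$. The relations $R_1,\dots,R_5\subseteq\{0,1\}^4$ are $R_1=\{0000,1000,0100,1100,1010,0110,1001,0101,0011,1011,0111,1111\}$, $R_2=\{0000,1000,0100,1100,1010,0101,0011,1111\}$, $R_3=\{0000,1100,1010,0101,0011,1011,0111,1111\}$, $R_4=\{0000,1100,1010,0101,0011,1111\}$, $R_5=\{0000,1100,1010,0110,1001,0101,0011,1111\}$. For $R,S\subseteq\{0,1\}^4$, a Boolean function $f\colon\{0,1\}^n\to\{0,1\}$ is analogy-preserving relative to $(R,S)$ if for all $\mathbf{a},\mathbf{b},\mathbf{c},\mathbf{d}\in\{0,1\}^n$ with $(a_i,b_i,c_i,d_i)\in R$ for every $i$ and such that $(f(\mathbf{a}),f(\mathbf{b}),f(\mathbf{c}),x)\in S$ for some $x\in\{0,1\}$, we have $(f(\mathbf{a}),f(\mathbf{b}),f(\mathbf{c}),f(\mathbf{d}))\in S$; $\mathsf{AP}(R,S)$ is the set of all such functions of all arities. $\mathsf{N}$ is the set of all Boolean functions (of all arities) that are constant or the negation of a projection. *)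

theory Defs
  imports Main
begin

text \<open>Tuples in {0,1}^4 are encoded as bool quadruples, with 1 = True, 0 = False.\<close>

type_synonym quad = "bool \<times> bool \<times> bool \<times> bool"

definition R2 :: "quad set" where
  "R2 = {(False,False,False,False), (True,False,False,False), (False,True,False,False),
         (True,True,False,False), (True,False,True,False), (False,True,False,True),
         (False,False,True,True), (True,True,True,True)}"

definition R3 :: "quad set" where
  "R3 = {(False,False,False,False), (True,True,False,False), (True,False,True,False),
         (False,True,False,True), (False,False,True,True), (True,False,True,True),
         (False,True,True,True), (True,True,True,True)}"

text \<open>An n-ary Boolean function is represented by f :: bool list \<Rightarrow> bool, only its values
  on lists of length n being relevant.  AP_n R S f: f, viewed as n-ary, is in AP(R,S).\<close>

definition AP :: "quad set \<Rightarrow> quad set \<Rightarrow> nat \<Rightarrow> (bool list \<Rightarrow> bool) \<Rightarrow> bool" where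
  "AP R S n f \<longleftrightarrow>
     (\<forall>a b c d. length a = n \<and> length b = n \<and> length c = n \<and> length d = n \<and>
        (\<forall>i<n. (a!i, b!i, c!i, d!i) \<in> R) \<and> (\<exists>x. (f a, f b, f c, x) \<in> S)
        \<longrightarrow> (f a, f b, f c, f d) \<in> S)"

definition inN :: "nat \<Rightarrow> (bool list \<Rightarrow> bool) \<Rightarrow> bool" where
  "inN n f \<longleftrightarrow>
     (\<exists>k. \<forall>x. length x = n \<longrightarrow> f x = k) \<or>
     (\<exists>i<n. \<forall>x. length x = n \<longrightarrow> f x = (\<not> x!i))"

end

theory Submission
  imports Defs
begin

lemma nn[simp]: "map Not (map Not x) = x" by (induct x) auto

lemma apD: "AP R S n f \<Longrightarrow> length a = n \<Longrightarrow> length b = n \<Longrightarrow> length c = n \<Longrightarrow> length d = n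
  \<Longrightarrow> (\<And>i. i<n \<Longrightarrow> (a!i,b!i,c!i,d!i) \<in> R) \<Longrightarrow> (f a, f b, f c, x) \<in> S
  \<Longrightarrow> (f a,f b,f c,f d) \<in> S"
  unfolding AP_def by blast

lemma R23: "((p,q,r,s) \<in> R2) = ((\<not>p,\<not>q,\<not>r,\<not>s) \<in> R3)"
  by (cases p; cases q; cases r; cases s) (simp_all add: R2_def R3_def)

lemma R32: "((p,q,r,s) \<in> R3) = ((\<not>p,\<not>q,\<not>r,\<not>s) \<in> R2)"
  by (cases p; cases q; cases r; cases s) (simp_all add: R2_def R3_def)

lemma N_AP:
  assumes "inN n f" and RS: "\<And>p q r s. (p,q,r,s) \<in> R \<Longrightarrow> (\<not>p,\<not>q,\<not>r,\<not>s) \<in> S"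
    and KS: "\<And>k x. (k,k,k,x) \<in> S \<Longrightarrow> (k,k,k,k) \<in> S"
  shows "AP R S n f"
  using assms(1) unfolding inN_def
proof
  assume "\<exists>k. \<forall>x. length x = n \<longrightarrow> f x = k"
  then obtain k where k: "\<forall>x. length x = n \<longrightarrow> f x = k" by blast
  show ?thesis unfolding AP_def using k KS by auto
next
  assume "\<exists>i<n. \<forall>x. length x = n \<longrightarrow> f x = (\<not> x!i)"
  then obtain i where i: "i < n" "\<forall>x. length x = n \<longrightarrow> f x = (\<not> x!i)" by blast
  show ?thesis unfolding AP_def using i RS by auto
qed

lemma s1: assumes ap: "AP R2 R3 n f" and "length z = n" "\<forall>i<n. \<not> z!i" "f z = False" "length x = n"
  shows "f x = False"
proof (rule ccontr)
  assume "f x \<noteq> False" hence fx: "f x = True" by simp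
  have "(f z, f x, f z, f z) \<in> R3"
    apply (rule apD[OF ap, where x=True]) using assms fx
    by (auto simp: R2_def R3_def)
  thus False using assms fx by (simp add: R3_def)
qed

lemma s2: assumes ap: "AP R2 R3 n f" and "length a = n" "length b = n"
  "\<forall>i<n. a!i \<longrightarrow> b!i" "f a = False"
  shows "f b = False"
proof (rule ccontr)
  assume "f b \<noteq> False" hence fb: "f b = True" by simp
  have "(f a, f b, f a, f a) \<in> R3"
    apply (rule apD[OF ap, where x=True]) using assms fb
      apply (auto simp: R3_def)
    subgoal for i by (cases "a!i"; cases "b!i") (auto simp: R2_def)
    done
  thus False using assms fb by (simp add: R3_def)
qed

lemma s3: assumes ap: "AP R2 R3 n f" and "length a = n" "length b = n"
  "f a = False" "f b = False"
  shows "f (map2 (\<and>) a b) = False"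
proof (rule ccontr)
  let ?c = "map2 (\<and>) a b"
  assume "f ?c \<noteq> False" hence fc: "f ?c = True" by simp
  have "(f a, f b, f ?c, f b) \<in> R3"
    apply (rule apD[OF ap, where x=True]) using assms fc
      apply (auto simp: R3_def)
    subgoal for i by (cases "a!i"; cases "b!i") (auto simp: R2_def)
    done
  thus False using assms fc by (simp add: R3_def)
qed

lemma s4: assumes ap: "AP R2 R3 n f" and "length z = n" "\<forall>i<n. \<not> z!i" "f z = True"
  "length o1 = n" "\<forall>i<n. o1!i" "f o1 = False" "length a = n" "f a = True"
  shows "f (map Not a) = False"
proof (rule ccontr)
  assume "f (map Not a) \<noteq> False" hence fc: "f (map Not a) = True" by simp
  have "(f a, f z, f o1, f (map Not a)) \<in> R3"
    apply (rule apD[OF ap, where x=False]) using assms fc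
      apply (auto simp: R3_def)
    subgoal for i by (cases "a!i") (auto simp: R2_def)
    done
  thus False using assms fc by (simp add: R3_def)
qed

lemma hard: assumes ap: "AP R2 R3 n f" shows "inN n f"
proof -
  define xs where "xs k = map (\<lambda>j. j < k) [0..<n]" for k
  have lx: "length (xs k) = n" for k by (simp add: xs_def)
  have nx: "i < n \<Longrightarrow> xs k ! i = (i < k)" for i k by (simp add: xs_def)
  show ?thesis
  proof (cases "f (xs 0)")
    case False
    then have "\<forall>x. length x = n \<longrightarrow> f x = False"
      using s1[OF ap lx] nx by auto
    thus ?thesis unfolding inN_def by blast
  next
    case f0: True
    show ?thesis
    proof (cases "\<forall>x. length x = n \<longrightarrow> f x = True")
      case True thus ?thesis unfolding inN_def by blast
    next
      case False
      then obtain y where y: "length y = n" "f y = False" by auto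
      have fn: "f (xs n) = False" using s2[OF ap y(1) lx, of n] y nx by auto
      then have "\<exists>k. f (xs k) = False" by blast
      then obtain k where k: "f (xs k) = False" "\<forall>m<k. f (xs m) \<noteq> False"
        using exists_least_iff[of "\<lambda>k. f (xs k) = False"] by blast
      have "k \<noteq> 0" using k f0 by (metis (full_types))
      then obtain j where kj: "k = Suc j" by (cases k) auto
      have "k \<le> n" using k fn by (meson not_le)
      hence jn: "j < n" using kj by simp
      have fv: "f (xs j) = True" using k kj by auto
      have fu: "f (xs (Suc j)) = False" using k kj by auto
      have "\<forall>x. length x = n \<longrightarrow> f x = (\<not> x!j)"
      proof (intro allI impI)
        fix x :: "bool list" assume lxx: "length x = n"
        show "f x = (\<not> x!j)"
        proof (cases "x!j")
          case False
          show ?thesis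
          proof (rule ccontr)
            assume "f x \<noteq> (\<not> x!j)"
            hence "f x = False" using False by simp
            hence m: "f (map2 (\<and>) (xs (Suc j)) x) = False" using s3[OF ap lx lxx] fu by simp
            have "f (xs j) = False"
              apply (rule s2[OF ap _ lx _ m])
              using lxx lx apply simp
              using nx False lx lxx by (auto simp: less_Suc_eq)
            thus False using fv by simp
          qed
        next
          case True
          show ?thesis
          proof (rule ccontr)
            assume "f x \<noteq> (\<not> x!j)"
            hence "f x = True" using True by simp
            hence "f (map Not x) = False"
              using s4[OF ap lx, of 0 "xs n"] nx f0 fn lxx lx by auto
            hence m: "f (map2 (\<and>) (xs (Suc j)) (map Not x)) = False" using s3[OF ap lx] fu lxx by simp
            have "f (xs j) = False"
              apply (rule s2[OF ap _ lx _ m])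
              using lxx lx apply simp
              using nx True lx lxx by (auto simp: less_Suc_eq)
            thus False using fv by simp
          qed
        qed
      qed
      thus ?thesis unfolding inN_def using jn by blast
    qed
  qed
qed

lemma transfer_AP: assumes ap: "AP R3 R2 n f"
  shows "AP R2 R3 n (\<lambda>x. \<not> f (map Not x))"
  unfolding AP_def
proof (intro allI impI, elim conjE exE)
  fix a b c d x
  assume l: "length a = n" "length b = n" "length c = n" "length d = n"
    and col: "\<forall>i<n. (a!i,b!i,c!i,d!i) \<in> R2"
    and ex: "(\<not> f (map Not a), \<not> f (map Not b), \<not> f (map Not c), x) \<in> R3"
  have "(f (map Not a), f (map Not b), f (map Not c), f (map Not d)) \<in> R2"
    apply (rule apD[OF ap, where x="\<not>x"])
    using l apply simp_all
    using col R23 apply auto[1]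
    using ex R32 by auto
  thus "(\<not> f (map Not a), \<not> f (map Not b), \<not> f (map Not c), \<not> f (map Not d)) \<in> R3"
    using R23 by auto
qed

lemma hard2: assumes ap: "AP R3 R2 n f" shows "inN n f"
proof -
  have "inN n (\<lambda>x. \<not> f (map Not x))" using hard[OF transfer_AP[OF ap]] .
  have inv: "f x = (\<not> (\<not> f (map Not (map Not x))))" for x by (simp add: comp_def)
  show ?thesis using \<open>inN n (\<lambda>x. \<not> f (map Not x))\<close> unfolding inN_def
  proof
    assume "\<exists>k. \<forall>x. length x = n \<longrightarrow> (\<not> f (map Not x)) = k"
    then obtain k where k: "\<forall>x. length x = n \<longrightarrow> (\<not> f (map Not x)) = k" by blast
    have "\<forall>x. length x = n \<longrightarrow> f x = (\<not> k)"
      using k inv by (metis length_map)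
    thus "(\<exists>k. \<forall>x. length x = n \<longrightarrow> f x = k) \<or> (\<exists>i<n. \<forall>x. length x = n \<longrightarrow> f x = (\<not> x!i))" by blast
  next
    assume "\<exists>i<n. \<forall>x. length x = n \<longrightarrow> (\<not> f (map Not x)) = (\<not> x!i)"
    then obtain i where i: "i<n" "\<forall>x. length x = n \<longrightarrow> (\<not> f (map Not x)) = (\<not> x!i)" by blast
    have "\<forall>x. length x = n \<longrightarrow> f x = (\<not> x!i)"
    proof (intro allI impI)
      fix x :: "bool list" assume "length x = n"
      then have "(\<not> f x) = (\<not> (map Not x)!i)" using i(2)[rule_format, of "map Not x"] by (simp only: nn length_map)
      thus "f x = (\<not> x!i)" using i(1) \<open>length x = n\<close> by (cases "f x") simp_all
    qed
    thus "(\<exists>k. \<forall>x. length x = n \<longrightarrow> f x = k) \<or> (\<exists>i<n. \<forall>x. length x = n \<longrightarrow> f x = (\<not> x!i))" using i by blast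
  qed
qed

theorem mainTheorem14:
  fixes n :: nat and f :: "bool list \<Rightarrow> bool"
  shows "(AP R2 R3 n f \<longleftrightarrow> inN n f) \<and> (AP R3 R2 n f \<longleftrightarrow> inN n f)"
proof -
  have a: "inN n f \<Longrightarrow> AP R2 R3 n f"
    by (rule N_AP) (auto simp: R23 R3_def)
  have b: "inN n f \<Longrightarrow> AP R3 R2 n f"
    by (rule N_AP) (auto simp: R32 R2_def)
  show ?thesis using a b hard hard2 by blast
qed

end
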